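(* Let $\mathfrak g=\mathfrak k+_\rho V$ be the semidirect sum of a finite-dimensional real Lie algebra $\mathfrak k$ and a commutative ideal $V$ via a representation $\rho:\mathfrak k\to\operatorname{End}(V)$. Let $f,g$ be polynomials on $\mathfrak g^*$ each satisfying $F(M,v)=F(M+L,v)$ for all $(M,v)\in\mathfrak g^*$ and $L\in\mathrm{St}_{\rho^*}(v)^\perp$, so that $f(M,v)=f_v(\pi_v(M))$ and $g(M,v)=g_v(\pi_v(M))$ for functions $f_v,g_v$ on $\mathrm{St}_{\rho^*}(v)^*$. Then $$\{f,g\}(M,v)=\{f_v,g_v\}_{\mathrm{St}_{\rho^*}(v)}(\pi_v(M)),$$ where the left side is the Lie–Poisson bracket of $\mathfrak g^*$ and the right side is the Lie–Poisson bracket on $\mathrm{St}_{\rho^*}(v)^*$.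
   Context: Elements of $\mathfrak g^*=\mathfrak k^*\oplus V^*$ are pairs $(M,v)$. $\rho^*:\mathfrak k\to\operatorname{End}(V^* )$ is the dual representation, $\mathrm{St}_{\rho^*}(v)=\{X\in\mathfrak k\mid\rho^*(X)v=0\}$, $\mathrm{St}_{\rho^*}(v)^\perp\subset\mathfrak k^*$ its annihilator, and $\pi_v:\mathfrak k^*\to\mathrm{St}_{\rho^*}(v)^*$ the restriction map. The Lie–Poisson bracket on $\mathfrak l^*$ for a Lie algebra $\mathfrak l$ is $\{f,g\}(x)=\langle x,[df(x),dg(x)]\rangle$. *)

theory Defs
  imports "HOL-Analysis.Analysis"
begin

text \<open>Finite-dimensional real vector spaces are modelled by euclidean_space types;
  the dual of such a space is identified with the space itself via the inner product
  (pairing of a functional M with a vector X is M \<bullet> X).\<close>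

definition lie_algebra :: "('k::euclidean_space \<Rightarrow> 'k \<Rightarrow> 'k) \<Rightarrow> bool" where
  "lie_algebra br \<longleftrightarrow> bilinear br \<and> (\<forall>x. br x x = 0) \<and>
     (\<forall>x y z. br x (br y z) + br y (br z x) + br z (br x y) = 0)"

definition lie_rep :: "('k::euclidean_space \<Rightarrow> 'k \<Rightarrow> 'k) \<Rightarrow> ('k \<Rightarrow> 'v::euclidean_space \<Rightarrow> 'v) \<Rightarrow> bool" where
  "lie_rep br \<rho> \<longleftrightarrow> bilinear \<rho> \<and>
     (\<forall>X Y. \<rho> (br X Y) = \<rho> X \<circ> \<rho> Y - \<rho> Y \<circ> \<rho> X)"

definition sd_bracket :: "('k::euclidean_space \<Rightarrow> 'k \<Rightarrow> 'k) \<Rightarrow> ('k \<Rightarrow> 'v::euclidean_space \<Rightarrow> 'v)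
     \<Rightarrow> 'k \<times> 'v \<Rightarrow> 'k \<times> 'v \<Rightarrow> 'k \<times> 'v" where
  "sd_bracket br \<rho> a b = (br (fst a) (fst b), \<rho> (fst a) (snd b) - \<rho> (fst b) (snd a))"

text \<open>Dual representation: (rho*(X) xi)(w) = - xi(rho(X) w).\<close>
definition rho_dual :: "('k \<Rightarrow> 'v::euclidean_space \<Rightarrow> 'v) \<Rightarrow> 'k \<Rightarrow> 'v \<Rightarrow> 'v" where
  "rho_dual \<rho> X v = - adjoint (\<rho> X) v"

definition St :: "('k \<Rightarrow> 'v::euclidean_space \<Rightarrow> 'v) \<Rightarrow> 'v \<Rightarrow> 'k set" where
  "St \<rho> v = {X. rho_dual \<rho> X v = 0}"

definition annihilator :: "'k::euclidean_space set \<Rightarrow> 'k set" where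
  "annihilator S = {L. \<forall>X\<in>S. L \<bullet> X = 0}"

text \<open>Restriction map k* \<rightarrow> S* for a subspace S; S* is identified with S, so the
  restriction of M is represented by the unique p \<in> S with (M - p) vanishing on S.\<close>
definition restr :: "'k::euclidean_space set \<Rightarrow> 'k \<Rightarrow> 'k" where
  "restr S M = (THE p. p \<in> S \<and> (\<forall>X\<in>S. (M - p) \<bullet> X = 0))"

inductive polyfun :: "('a::euclidean_space \<Rightarrow> real) \<Rightarrow> bool" where
  pconst: "polyfun (\<lambda>x. c)"
| plin: "polyfun (\<lambda>x. a \<bullet> x)"
| padd: "polyfun f \<Longrightarrow> polyfun g \<Longrightarrow> polyfun (\<lambda>x. f x + g x)"
| pmult: "polyfun f \<Longrightarrow> polyfun g \<Longrightarrow> polyfun (\<lambda>x. f x * g x)"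

text \<open>Differential df(x) \<in> S** = S of a function on S* (identified with the subspace S),
  at a point x \<in> S.\<close>
definition grad_within :: "('a::euclidean_space \<Rightarrow> real) \<Rightarrow> 'a set \<Rightarrow> 'a \<Rightarrow> 'a" where
  "grad_within f S x = (THE d. d \<in> S \<and> (f has_derivative (\<lambda>h. d \<bullet> h)) (at x within S))"

definition lie_poisson :: "('a::euclidean_space \<Rightarrow> 'a \<Rightarrow> 'a) \<Rightarrow> 'a set \<Rightarrow>
    ('a \<Rightarrow> real) \<Rightarrow> ('a \<Rightarrow> real) \<Rightarrow> 'a \<Rightarrow> real" where
  "lie_poisson br S f g x = x \<bullet> br (grad_within f S x) (grad_within g S x)"

end

theory Submission imports Defs begin

lemma polyfun_grad:
  assumes "polyfun f"
  shows "\<exists>G. \<forall>x. (f has_derivative (\<lambda>h. G x \<bullet> h)) (at x)"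
  using assms
proof induction
  case (pconst c) then show ?case by (intro exI[of _ "\<lambda>x. 0"]) (auto intro: derivative_eq_intros)
next
  case (plin a) then show ?case by (intro exI[of _ "\<lambda>x. a"]) (auto intro!: derivative_eq_intros)
next
  case (padd f g)
  then obtain G1 G2 where "\<And>x. (f has_derivative (\<lambda>h. G1 x \<bullet> h)) (at x)"
     "\<And>x. (g has_derivative (\<lambda>h. G2 x \<bullet> h)) (at x)" by blast
  then show ?case
    by (intro exI[of _ "\<lambda>x. G1 x + G2 x"]) (auto intro!: derivative_eq_intros simp: inner_add_left)
next
  case (pmult f g)
  then obtain G1 G2 where "\<And>x. (f has_derivative (\<lambda>h. G1 x \<bullet> h)) (at x)"
     "\<And>x. (g has_derivative (\<lambda>h. G2 x \<bullet> h)) (at x)" by blast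
  then show ?case
  proof (intro exI allI)
    fix x
    have "((\<lambda>x. f x * g x) has_derivative (\<lambda>h. f x * (G2 x \<bullet> h) + (G1 x \<bullet> h) * g x)) (at x)"
      by (rule has_derivative_mult) fact+
    moreover have "(\<lambda>h. f x * (G2 x \<bullet> h) + (G1 x \<bullet> h) * g x) = (\<lambda>h. (f x *\<^sub>R G2 x + g x *\<^sub>R G1 x) \<bullet> h)"
      by (simp add: inner_add_left algebra_simps)
    ultimately show "((\<lambda>x. f x * g x) has_derivative (\<lambda>h. (f x *\<^sub>R G2 x + g x *\<^sub>R G1 x) \<bullet> h)) (at x)"
      by simp
  qed
qed

lemma grad_unique_at:
  assumes "(f has_derivative (\<lambda>h. d \<bullet> h)) (at x)"
  shows "grad_within f UNIV x = d"
proof -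
  have u: "d' = d" if "(f has_derivative (\<lambda>h. d' \<bullet> h)) (at x)" for d'
  proof -
    have "(\<lambda>h. d' \<bullet> h) = (\<lambda>h. d \<bullet> h)" using has_derivative_unique[OF that assms] .
    then have "d' \<bullet> (d' - d) = d \<bullet> (d' - d)" by (rule fun_cong)
    then have "(d' - d) \<bullet> (d' - d) = 0" by (simp add: inner_diff_left)
    then show ?thesis by simp
  qed
  show ?thesis unfolding grad_within_def
    by (rule the_equality) (use assms u in blast)+
qed

lemma grad_unique_within:
  assumes S: "subspace S" and p: "p \<in> S" and d: "d \<in> S"
    and "(f has_derivative (\<lambda>h. d \<bullet> h)) (at p within S)"
  shows "grad_within f S p = d"
proof -
  have u: "d' = d" if d': "d' \<in> S" "(f has_derivative (\<lambda>h. d' \<bullet> h)) (at p within S)" for d'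
  proof -
    define w where "w = d' - d"
    have wS: "w \<in> S" using d d' S by (simp add: w_def subspace_diff)
    define l where "l = (\<lambda>t::real. p + t *\<^sub>R w)"
    have lS: "range l \<subseteq> S" using S p wS by (auto simp: l_def intro!: subspace_add subspace_scale)
    have ld: "(l has_derivative (\<lambda>t. t *\<^sub>R w)) (at 0)"
      unfolding l_def by (auto intro!: derivative_eq_intros)
    have l0: "l 0 = p" by (simp add: l_def)
    have D: "((f \<circ> l) has_derivative (\<lambda>t. e \<bullet> (t *\<^sub>R w))) (at 0)"
      if "(f has_derivative (\<lambda>h. e \<bullet> h)) (at p within S)" for e
    proof -
      have "(f has_derivative (\<lambda>h. e \<bullet> h)) (at (l 0) within range l)"
        using has_derivative_subset[OF that lS] l0 by simp
      from diff_chain_within[OF ld this]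
      show ?thesis by (simp add: o_def)
    qed
    have "(\<lambda>t. d' \<bullet> (t *\<^sub>R w)) = (\<lambda>t. d \<bullet> (t *\<^sub>R w))"
      using has_derivative_unique[OF D[OF d'(2)] D[OF assms(4)]] .
    then have "d' \<bullet> w = d \<bullet> w" by (metis scaleR_one)
    then have "w \<bullet> w = 0" by (simp add: w_def inner_diff_left)
    then show ?thesis by (simp add: w_def)
  qed
  show ?thesis unfolding grad_within_def
    by (rule the_equality) (use assms u in blast)+
qed


lemma St_char:
  assumes "bilinear \<rho>"
  shows "X \<in> St \<rho> v \<longleftrightarrow> (\<forall>w. v \<bullet> \<rho> X w = 0)"
proof -
  have lin: "linear (\<rho> X)" using assms unfolding bilinear_def by auto
  have aw: "w \<bullet> adjoint (\<rho> X) v = \<rho> X w \<bullet> v" for w using adjoint_works[OF lin] .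
  show ?thesis
  proof
    assume "X \<in> St \<rho> v"
    then have "adjoint (\<rho> X) v = 0" by (simp add: St_def rho_dual_def)
    then show "\<forall>w. v \<bullet> \<rho> X w = 0" using aw by (metis inner_commute inner_zero_right)
  next
    assume h: "\<forall>w. v \<bullet> \<rho> X w = 0"
    have "adjoint (\<rho> X) v \<bullet> adjoint (\<rho> X) v = 0" using aw h by (simp add: inner_commute)
    then show "X \<in> St \<rho> v" by (simp add: St_def rho_dual_def)
  qed
qed

lemma subspace_St:
  assumes "bilinear \<rho>"
  shows "subspace (St \<rho> v)"
  unfolding subspace_def
  by (simp add: St_char[OF assms] bilinear_lzero[OF assms] bilinear_ladd[OF assms] bilinear_lmul[OF assms]
      inner_add_right)

lemma St_bracket:
  assumes "lie_rep br \<rho>" "X \<in> St \<rho> v" "Y \<in> St \<rho> v"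
  shows "br X Y \<in> St \<rho> v"
proof -
  have b: "bilinear \<rho>" and r: "\<rho> (br X Y) = \<rho> X \<circ> \<rho> Y - \<rho> Y \<circ> \<rho> X"
    using assms(1) unfolding lie_rep_def by auto
  show ?thesis using assms(2,3) unfolding St_char[OF b] r
    by (simp add: inner_diff_right)
qed

lemma restr_props:
  fixes S :: "'k::euclidean_space set"
  assumes "subspace S"
  shows "restr S M \<in> S \<and> (\<forall>X\<in>S. (M - restr S M) \<bullet> X = 0)"
proof -
  obtain y z where y: "y \<in> span S" and z: "\<And>w. w \<in> span S \<Longrightarrow> orthogonal z w" and e: "M = y + z"
    using orthogonal_subspace_decomp_exists[of S M] by metis
  have sp: "span S = S" using assms by (simp add: span_eq_iff)
  have P: "y \<in> S \<and> (\<forall>X\<in>S. (M - y) \<bullet> X = 0)"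
    using y z e sp by (auto simp: orthogonal_def)
  have U: "p = y" if "p \<in> S \<and> (\<forall>X\<in>S. (M - p) \<bullet> X = 0)" for p
  proof -
    have "y - p \<in> S" using that P assms by (simp add: subspace_diff)
    then have "(M - p) \<bullet> (y - p) = 0" "(M - y) \<bullet> (y - p) = 0" using that P by auto
    then have "(y - p) \<bullet> (y - p) = 0" by (simp add: inner_diff_left)
    then show ?thesis by simp
  qed
  have "restr S M = y" unfolding restr_def by (rule the_equality) (use P U in blast)+
  then show ?thesis using P by simp
qed

lemma restr_id:
  assumes "subspace S" "x \<in> S"
  shows "restr S x = x"
proof -
  have P: "restr S x \<in> S" "\<forall>X\<in>S. (x - restr S x) \<bullet> X = 0" using restr_props[OF assms(1)] by auto
  have "x - restr S x \<in> S" using P assms by (simp add: subspace_diff)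
  then have "(x - restr S x) \<bullet> (x - restr S x) = 0" using P by auto
  then show ?thesis by simp
qed


lemma partial_deriv:
  fixes f :: "'k::euclidean_space \<times> 'v::euclidean_space \<Rightarrow> real"
  assumes "(f has_derivative (\<lambda>h. d \<bullet> h)) (at (x + L, v))"
  shows "((\<lambda>y. f (y + L, v)) has_derivative (\<lambda>h. fst d \<bullet> h)) (at x)"
proof -
  have l: "((\<lambda>y. (y + L, v)) has_derivative (\<lambda>h. (h, 0))) (at x)"
    by (rule has_derivative_Pair[OF has_derivative_add_const[OF has_derivative_ident] has_derivative_const])
  have "((f \<circ> (\<lambda>y. (y + L, v))) has_derivative ((\<lambda>h. d \<bullet> h) \<circ> (\<lambda>h. (h, 0)))) (at x)"
    by (rule diff_chain_at[OF l]) (use assms in simp)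
  moreover have "((\<lambda>h. d \<bullet> h) \<circ> (\<lambda>h. (h, 0))) = (\<lambda>h. fst d \<bullet> h)"
    by (rule ext) (cases d, simp)
  ultimately show ?thesis by (simp add: o_def)
qed

lemma grad_in_S:
  fixes f :: "'k::euclidean_space \<times> 'v::euclidean_space \<Rightarrow> real"
  assumes D: "(f has_derivative (\<lambda>h. d \<bullet> h)) (at (M, v))"
    and inv: "\<And>M' L. L \<in> annihilator S \<Longrightarrow> f (M', v) = f (M' + L, v)"
    and S: "subspace S"
  shows "fst d \<in> S"
proof -
  have orth: "fst d \<bullet> L = 0" if L: "L \<in> annihilator S" for L
  proof -
    have s1: "((\<lambda>t::real. t *\<^sub>R L) has_derivative (\<lambda>t. t *\<^sub>R L)) (at 0)"
      by (rule bounded_linear_imp_has_derivative) (rule bounded_linear_scaleR_left)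
    have s2: "((\<lambda>t::real. t *\<^sub>R L + M) has_derivative (\<lambda>t. t *\<^sub>R L)) (at 0)"
      by (rule has_derivative_add_const[OF s1])
    have l: "((\<lambda>t::real. (M + t *\<^sub>R L, v)) has_derivative (\<lambda>t. (t *\<^sub>R L, 0))) (at 0)"
      using has_derivative_Pair[OF s2 has_derivative_const] by (simp add: add.commute)
    have "((f \<circ> (\<lambda>t::real. (M + t *\<^sub>R L, v))) has_derivative ((\<lambda>h. d \<bullet> h) \<circ> (\<lambda>t. (t *\<^sub>R L, 0)))) (at 0)"
      by (rule diff_chain_at[OF l]) (use D in simp)
    moreover have "f \<circ> (\<lambda>t::real. (M + t *\<^sub>R L, v)) = (\<lambda>t. f (M, v))"
    proof
      fix t :: real
      have "t *\<^sub>R L \<in> annihilator S" using L by (simp add: annihilator_def)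
      then show "(f \<circ> (\<lambda>t::real. (M + t *\<^sub>R L, v))) t = f (M, v)" using inv[of "t *\<^sub>R L" M] by simp
    qed
    ultimately have "((\<lambda>t::real. f (M, v)) has_derivative ((\<lambda>h. d \<bullet> h) \<circ> (\<lambda>t. (t *\<^sub>R L, 0)))) (at 0)"
      by simp
    moreover have "((\<lambda>t::real. f (M, v)) has_derivative (\<lambda>t. 0)) (at 0)" by simp
    ultimately have "((\<lambda>h. d \<bullet> h) \<circ> (\<lambda>t::real. (t *\<^sub>R L, 0))) = (\<lambda>t. 0)"
      by (rule has_derivative_unique)
    then have "((\<lambda>h. d \<bullet> h) \<circ> (\<lambda>t::real. (t *\<^sub>R L, 0))) 1 = 0" by simp
    then show ?thesis by (cases d) simp
  qed
  obtain y z where y: "y \<in> span S" and z: "\<And>w. w \<in> span S \<Longrightarrow> orthogonal z w" and e: "fst d = y + z"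
    using orthogonal_subspace_decomp_exists[of S "fst d"] by metis
  have sp: "span S = S" using S by (simp add: span_eq_iff)
  have zA: "z \<in> annihilator S" using z sp by (auto simp: annihilator_def orthogonal_def inner_commute)
  have "z \<bullet> y = 0" using z y by (simp add: orthogonal_def)
  moreover have "(y + z) \<bullet> z = 0" using orth[OF zA] e by simp
  ultimately have "z \<bullet> z = 0" by (simp add: inner_add_left inner_add_right inner_commute)
  then show ?thesis using e y sp by simp
qed


lemma grad_shift:
  fixes f :: "'k::euclidean_space \<times> 'v::euclidean_space \<Rightarrow> real"
  assumes G: "\<And>z. (f has_derivative (\<lambda>h. G z \<bullet> h)) (at z)"
    and eq: "\<And>y. f (y + L, v) = f (y, v)"
  shows "fst (G (x + L, v)) = fst (G (x, v))"
proof -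
  have d1: "((\<lambda>y. f (y + L, v)) has_derivative (\<lambda>h. fst (G (x + L, v)) \<bullet> h)) (at x)"
    by (rule partial_deriv) (rule G)
  have d2: "((\<lambda>y. f (y + 0, v)) has_derivative (\<lambda>h. fst (G (x + 0, v)) \<bullet> h)) (at x)"
    by (rule partial_deriv) (rule G)
  have "(\<lambda>y. f (y + L, v)) = (\<lambda>y. f (y + 0, v))" using eq by simp
  with d1 have d1': "((\<lambda>y. f (y + 0, v)) has_derivative (\<lambda>h. fst (G (x + L, v)) \<bullet> h)) (at x)" by simp
  have "(\<lambda>h. fst (G (x + L, v)) \<bullet> h) = (\<lambda>h. fst (G (x + 0, v)) \<bullet> h)"
    by (rule has_derivative_unique[OF d1' d2])
  then have "fst (G (x + L, v)) \<bullet> (fst (G (x + L, v)) - fst (G (x, v)))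
           = fst (G (x, v)) \<bullet> (fst (G (x + L, v)) - fst (G (x, v)))"
    by (metis add_0_right)
  then have "(fst (G (x + L, v)) - fst (G (x, v))) \<bullet> (fst (G (x + L, v)) - fst (G (x, v))) = 0"
    by (simp add: inner_diff_left)
  then show ?thesis by simp
qed

theorem lemma12:
  fixes br :: "'k::euclidean_space \<Rightarrow> 'k \<Rightarrow> 'k"
    and \<rho> :: "'k \<Rightarrow> 'v::euclidean_space \<Rightarrow> 'v"
    and f g :: "'k \<times> 'v \<Rightarrow> real"
    and fv gv :: "'k \<Rightarrow> real"
    and M :: 'k and v :: 'v
  assumes "lie_algebra br"
    and "lie_rep br \<rho>"
    and "polyfun f" and "polyfun g"
    and "\<And>M' v' L. L \<in> annihilator (St \<rho> v') \<Longrightarrow> f (M', v') = f (M' + L, v')"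
    and "\<And>M' v' L. L \<in> annihilator (St \<rho> v') \<Longrightarrow> g (M', v') = g (M' + L, v')"
    and "\<And>M'. f (M', v) = fv (restr (St \<rho> v) M')"
    and "\<And>M'. g (M', v) = gv (restr (St \<rho> v) M')"
  shows "lie_poisson (sd_bracket br \<rho>) UNIV f g (M, v)
       = lie_poisson br (St \<rho> v) fv gv (restr (St \<rho> v) M)"
proof -
  define S where "S = St \<rho> v"
  have b: "bilinear \<rho>" using assms(2) by (simp add: lie_rep_def)
  have S: "subspace S" unfolding S_def by (rule subspace_St[OF b])
  define p where "p = restr S M"
  have pS: "p \<in> S" and pM: "\<And>X. X \<in> S \<Longrightarrow> (M - p) \<bullet> X = 0"
    using restr_props[OF S, of M] by (auto simp: p_def)
  have LA: "M - p \<in> annihilator S" using pM by (simp add: annihilator_def)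
  have Mp: "M = p + (M - p)" by simp
  obtain Gf where Gf: "\<And>z. (f has_derivative (\<lambda>h. Gf z \<bullet> h)) (at z)"
    using polyfun_grad[OF assms(3)] by blast
  obtain Gg where Gg: "\<And>z. (g has_derivative (\<lambda>h. Gg z \<bullet> h)) (at z)"
    using polyfun_grad[OF assms(4)] by blast
  have invf: "\<And>M' L. L \<in> annihilator S \<Longrightarrow> f (M', v) = f (M' + L, v)"
    unfolding S_def by (rule assms(5))
  have invg: "\<And>M' L. L \<in> annihilator S \<Longrightarrow> g (M', v) = g (M' + L, v)"
    unfolding S_def by (rule assms(6))
  have gf: "grad_within f UNIV (M, v) = Gf (M, v)" by (rule grad_unique_at[OF Gf])
  have gg: "grad_within g UNIV (M, v) = Gg (M, v)" by (rule grad_unique_at[OF Gg])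
  have afS: "fst (Gf (M, v)) \<in> S" by (rule grad_in_S[OF Gf invf S])
  have agS: "fst (Gg (M, v)) \<in> S" by (rule grad_in_S[OF Gg invg S])
  have shf: "fst (Gf (M, v)) = fst (Gf (p, v))"
    using grad_shift[OF Gf, of "M - p" v p] invf[OF LA] by simp
  have shg: "fst (Gg (M, v)) = fst (Gg (p, v))"
    using grad_shift[OF Gg, of "M - p" v p] invg[OF LA] by simp
  have fvS: "fv y = f (y, v)" if "y \<in> S" for y
    using assms(7)[of y] restr_id[OF S that] by (simp add: S_def)
  have gvS: "gv y = g (y, v)" if "y \<in> S" for y
    using assms(8)[of y] restr_id[OF S that] by (simp add: S_def)
  have dfv: "(fv has_derivative (\<lambda>h. fst (Gf (M, v)) \<bullet> h)) (at p within S)"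
  proof -
    have "((\<lambda>y. f (y + 0, v)) has_derivative (\<lambda>h. fst (Gf (p + 0, v)) \<bullet> h)) (at p)"
      by (rule partial_deriv) (rule Gf)
    then have "((\<lambda>y. f (y, v)) has_derivative (\<lambda>h. fst (Gf (M, v)) \<bullet> h)) (at p within S)"
      using shf by (simp add: has_derivative_at_withinI)
    then show ?thesis
      by (rule has_derivative_transform_within[where d=1]) (use pS fvS in auto)
  qed
  have dgv: "(gv has_derivative (\<lambda>h. fst (Gg (M, v)) \<bullet> h)) (at p within S)"
  proof -
    have "((\<lambda>y. g (y + 0, v)) has_derivative (\<lambda>h. fst (Gg (p + 0, v)) \<bullet> h)) (at p)"
      by (rule partial_deriv) (rule Gg)
    then have "((\<lambda>y. g (y, v)) has_derivative (\<lambda>h. fst (Gg (M, v)) \<bullet> h)) (at p within S)"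
      using shg by (simp add: has_derivative_at_withinI)
    then show ?thesis
      by (rule has_derivative_transform_within[where d=1]) (use pS gvS in auto)
  qed
  have gfv: "grad_within fv S p = fst (Gf (M, v))" by (rule grad_unique_within[OF S pS afS dfv])
  have ggv: "grad_within gv S p = fst (Gg (M, v))" by (rule grad_unique_within[OF S pS agS dgv])
  define a where "a = fst (Gf (M, v))"
  define c where "c = fst (Gg (M, v))"
  have aS: "a \<in> S" and cS: "c \<in> S" using afS agS by (auto simp: a_def c_def)
  have va: "\<And>w. v \<bullet> \<rho> a w = 0" using aS St_char[OF b] by (auto simp: S_def)
  have vc: "\<And>w. v \<bullet> \<rho> c w = 0" using cS St_char[OF b] by (auto simp: S_def)
  have brS: "br a c \<in> S" using St_bracket[OF assms(2)] aS cS by (simp add: S_def)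
  have "lie_poisson (sd_bracket br \<rho>) UNIV f g (M, v) = M \<bullet> br a c"
    unfolding lie_poisson_def gf gg sd_bracket_def a_def[symmetric] c_def[symmetric]
    by (simp add: inner_diff_right va vc)
  also have "\<dots> = p \<bullet> br a c" using pM[OF brS] by (simp add: inner_diff_left)
  also have "\<dots> = lie_poisson br S fv gv p"
    unfolding lie_poisson_def gfv ggv a_def c_def ..
  finally show ?thesis by (simp add: S_def p_def)
qed

end
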